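(* Let $k$ be a field and $d$ a positive integer such that the characteristic of $k$ does not divide $d$ (i.e. $d\cdot 1_k\neq 0$). Then $R_1^{(d)}$ is a (two-sided) ideal of $k_0\langle X\rangle$; in particular $R_1^{(d)}=R_2^{(d)}$.
   Context: Let $X=\{x_1,x_2,\ldots\}$ be a countably infinite set and let $k_0\langle X\rangle$ denote the free associative $k$-algebra (without identity) on $X$. A $T$-space of $k_0\langle X\rangle$ is a $k$-linear subspace closed under every algebra endomorphism of $k_0\langle X\rangle$; the $T$-space generated by a subset is the smallest $T$-space containing it. For $v_1,\ldots,v_d\in k_0\langle X\rangle$, let $S_d(v_1,\ldots,v_d)=\sum_{\sigma\in\Sigma_d}\prod_{i=1}^d v_{\sigma(i)}$, where $\Sigma_d$ is the symmetric group on $d$ letters; write $S_d(x)=S_d(x_1,\ldots,x_d)$. Let $R_1^{(d)}$ be the $T$-space generated by $S_d(x)$, and let $R_2^{(d)}$ be the $T$-space generated by $R_1^{(d)}$ together with all products $u\,S_d(v_1,\ldots,v_d)$ with $u\in R_1^{(d)}$, $v_i\in k_0\langle X\rangle$. *)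

theory Defs
  imports Main "HOL-Combinatorics.Permutations"
begin

text \<open>The free associative k-algebra without identity on X = {x_0, x_1, ...}:
  elements are coefficient functions on words (lists of variable indices)
  with finite support and zero coefficient on the empty word.\<close>

type_synonym 'k fa = "nat list \<Rightarrow> 'k"

definition FA :: "'k::field fa set" where
  "FA = {p. finite {w. p w \<noteq> 0} \<and> p [] = 0}"

definition fa_add :: "'k::field fa \<Rightarrow> 'k fa \<Rightarrow> 'k fa" where
  "fa_add p q = (\<lambda>w. p w + q w)"

definition fa_smult :: "'k::field \<Rightarrow> 'k fa \<Rightarrow> 'k fa" where
  "fa_smult c p = (\<lambda>w. c * p w)"

definition fa_zero :: "'k::field fa" where
  "fa_zero = (\<lambda>w. 0)"

definition fa_mult :: "'k::field fa \<Rightarrow> 'k fa \<Rightarrow> 'k fa" where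
  "fa_mult p q = (\<lambda>w. \<Sum>i\<le>length w. p (take i w) * q (drop i w))"

definition fa_var :: "nat \<Rightarrow> 'k::field fa" where
  "fa_var i = (\<lambda>w. if w = [i] then 1 else 0)"

definition fa_endo :: "('k::field fa \<Rightarrow> 'k fa) \<Rightarrow> bool" where
  "fa_endo f \<longleftrightarrow> (\<forall>p\<in>FA. f p \<in> FA)
     \<and> (\<forall>p\<in>FA. \<forall>q\<in>FA. f (fa_add p q) = fa_add (f p) (f q))
     \<and> (\<forall>c. \<forall>p\<in>FA. f (fa_smult c p) = fa_smult c (f p))
     \<and> (\<forall>p\<in>FA. \<forall>q\<in>FA. f (fa_mult p q) = fa_mult (f p) (f q))"

definition fa_subspace :: "'k::field fa set \<Rightarrow> bool" where
  "fa_subspace V \<longleftrightarrow> V \<subseteq> FA \<and> fa_zero \<in> V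
     \<and> (\<forall>p\<in>V. \<forall>q\<in>V. fa_add p q \<in> V)
     \<and> (\<forall>c. \<forall>p\<in>V. fa_smult c p \<in> V)"

definition T_space :: "'k::field fa set \<Rightarrow> bool" where
  "T_space V \<longleftrightarrow> fa_subspace V \<and> (\<forall>f. fa_endo f \<longrightarrow> (\<forall>p\<in>V. f p \<in> V))"

definition T_gen :: "'k::field fa set \<Rightarrow> 'k fa set" where
  "T_gen S = \<Inter>{V. T_space V \<and> S \<subseteq> V}"

definition fa_ideal :: "'k::field fa set \<Rightarrow> bool" where
  "fa_ideal I \<longleftrightarrow> fa_subspace I
     \<and> (\<forall>u\<in>I. \<forall>a\<in>FA. fa_mult a u \<in> I \<and> fa_mult u a \<in> I)"

text \<open>Product of a nonempty list of elements (no identity available).\<close>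
fun fa_prod :: "'k::field fa list \<Rightarrow> 'k fa" where
  "fa_prod [] = fa_zero"
| "fa_prod [v] = v"
| "fa_prod (v # vs) = fa_mult v (fa_prod vs)"

text \<open>S_d(v_1,...,v_d) with arguments indexed 0..d-1: the sum over all
  permutations s of {0..<d} of the ordered product v(s 0) ... v(s (d-1)).\<close>
definition S_poly :: "nat \<Rightarrow> (nat \<Rightarrow> 'k::field fa) \<Rightarrow> 'k fa" where
  "S_poly d v = (\<lambda>w. \<Sum>s\<in>{s. s permutes {..<d}}. fa_prod (map (v \<circ> s) [0..<d]) w)"

definition R1 :: "nat \<Rightarrow> 'k::field fa set" where
  "R1 d = T_gen {S_poly d fa_var}"

definition R2 :: "nat \<Rightarrow> 'k::field fa set" where
  "R2 d = T_gen (R1 d \<union>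
     {fa_mult u (S_poly d v) | u v. u \<in> R1 d \<and> (\<forall>i. v i \<in> FA)})"

end

theory Submission
  imports Defs "HOL-Combinatorics.Multiset_Permutations"
begin



lemma tri_swap:
  fixes g :: "nat \<Rightarrow> nat \<Rightarrow> 'a::comm_monoid_add"
  shows "(\<Sum>k\<le>n. \<Sum>i\<le>k. g i (k - i)) = (\<Sum>i\<le>n. \<Sum>j\<le>n - i. g i j)"
proof -
  have "(\<Sum>k\<le>n. \<Sum>i\<le>k. g i (k - i)) = (\<Sum>(i,j)\<in>{(i,j). i+j \<le> n}. g i j)"
    by (rule sum.triangle_reindex_eq[symmetric])
  also have "{(i,j). i+j \<le> n} = (SIGMA i:{..n}. {..n-i})" by auto
  also have "(\<Sum>(i,j)\<in>(SIGMA i:{..n}. {..n-i}). g i j) = (\<Sum>i\<le>n. \<Sum>j\<le>n - i. g i j)"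
    by (rule sum.Sigma[symmetric]) auto
  finally show ?thesis .
qed

definition conv :: "(nat list \<Rightarrow> 'k::ring) \<Rightarrow> (nat list \<Rightarrow> 'k) \<Rightarrow> nat list \<Rightarrow> 'k" where
  "conv p q = (\<lambda>w. \<Sum>i\<le>length w. p (take i w) * q (drop i w))"

lemma conv_assoc: "conv (conv p q) r = conv p (conv q r)"
proof
  fix w :: "nat list"
  let ?n = "length w"
  have "conv (conv p q) r w = (\<Sum>k\<le>?n. \<Sum>i\<le>k. p (take i w) * q (take (k-i) (drop i w)) * r (drop k w))"
    unfolding conv_def
    by (auto simp: sum_distrib_right min_def take_drop intro!: sum.cong)
  also have "\<dots> = (\<Sum>i\<le>?n. \<Sum>j\<le>?n - i. p (take i w) * q (take j (drop i w)) * r (drop (i+j) w))"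
    using tri_swap[of "\<lambda>i j. p (take i w) * q (take j (drop i w)) * r (drop (i+j) w)" ?n]
    by simp
  also have "\<dots> = conv p (conv q r) w"
    unfolding conv_def
    by (auto simp: sum_distrib_left mult.assoc add.commute intro!: sum.cong)
  finally show "conv (conv p q) r w = conv p (conv q r) w" .
qed

lemma conv_distL: "conv (\<lambda>w. p w + q w) r = (\<lambda>w. conv p r w + conv q r w)"
  by (auto simp: conv_def distrib_right sum.distrib)
lemma conv_distR: "conv r (\<lambda>w. p w + q w) = (\<lambda>w. conv r p w + conv r q w)"
  by (auto simp: conv_def distrib_left sum.distrib)

lemma conv_oneL: "conv (\<lambda>w. if w = [] then 1 else 0) (p::nat list \<Rightarrow> 'k::ring_1) = p"
proof
  fix w :: "nat list"
  have "conv (\<lambda>w. if w = [] then 1 else 0) p w = (\<Sum>i\<in>{0}. (if take i w = [] then 1 else 0) * p (drop i w))"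
    unfolding conv_def by (rule sum.mono_neutral_right) auto
  then show "conv (\<lambda>w. if w = [] then 1 else 0) p w = p w" by simp
qed

lemma conv_oneR: "conv (p::nat list \<Rightarrow> 'k::ring_1) (\<lambda>w. if w = [] then 1 else 0) = p"
proof
  fix w :: "nat list"
  have "conv p (\<lambda>w. if w = [] then 1 else 0) w = (\<Sum>i\<in>{length w}. p (take i w) * (if drop i w = [] then 1 else 0))"
    unfolding conv_def by (rule sum.mono_neutral_right) auto
  then show "conv p (\<lambda>w. if w = [] then 1 else 0) w = p w" by simp
qed

typedef 'k ser = "UNIV :: (nat list \<Rightarrow> 'k) set" morphisms coef Ser by auto
setup_lifting type_definition_ser

instantiation ser :: (ring_1) ring_1
begin
lift_definition zero_ser :: "'k::ring_1 ser" is "\<lambda>w::nat list. 0::'k::ring_1" .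
lift_definition one_ser :: "'k::ring_1 ser" is "\<lambda>w::nat list. if w = [] then (1::'k::ring_1) else 0" .
lift_definition plus_ser :: "'k::ring_1 ser \<Rightarrow> 'k ser \<Rightarrow> 'k ser" is "\<lambda>(p::nat list \<Rightarrow> 'k::ring_1) q w. p w + q w" .
lift_definition minus_ser :: "'k::ring_1 ser \<Rightarrow> 'k ser \<Rightarrow> 'k ser" is "\<lambda>(p::nat list \<Rightarrow> 'k::ring_1) q w. p w - q w" .
lift_definition uminus_ser :: "'k::ring_1 ser \<Rightarrow> 'k ser" is "\<lambda>(p::nat list \<Rightarrow> 'k::ring_1) w. - p w" .
lift_definition times_ser :: "'k::ring_1 ser \<Rightarrow> 'k ser \<Rightarrow> 'k ser" is conv .
instance
proof
  fix a b c :: "'k::ring_1 ser"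
  show "a * b * c = a * (b * c)" by transfer (rule conv_assoc)
  show "(a + b) * c = a * c + b * c" by transfer (rule conv_distL)
  show "a * (b + c) = a * b + a * c" by transfer (rule conv_distR)
  show "1 * a = a" by transfer (rule conv_oneL)
  show "a * 1 = a" by transfer (rule conv_oneR)
  show "a + b + c = a + (b + c)" by transfer (simp add: add.assoc)
  show "a + b = b + a" by transfer (simp add: add.commute)
  show "0 + a = a" by transfer simp
  show "- a + a = 0" by transfer simp
  show "a - b = a + - b" by transfer simp
  show "(0::'k::ring_1 ser) \<noteq> 1" by transfer (metis zero_neq_one)
qed
end




definition P :: "('i \<Rightarrow> 'a::ring_1) \<Rightarrow> 'i set \<Rightarrow> 'a" where
  "P f A = (\<Sum>xs\<in>permutations_of_set A. prod_list (map f xs))"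

lemma P_empty[simp]: "P f {} = 1"
  by (simp add: P_def)

lemma P_cong: "(\<And>x. x \<in> A \<Longrightarrow> f x = g x) \<Longrightarrow> P f A = P g A"
  unfolding P_def
proof (rule sum.cong[OF refl])
  fix xs assume "xs \<in> permutations_of_set A" "\<And>x. x \<in> A \<Longrightarrow> f x = g x"
  then show "prod_list (map f xs) = prod_list (map g xs)"
    by (metis map_cong permutations_of_setD(1))
qed

lemma P_first:
  assumes "finite A" "A \<noteq> {}"
  shows "P f A = (\<Sum>m\<in>A. f m * P f (A - {m}))"
proof -
  have "P f A = (\<Sum>xs\<in>(\<Union>x\<in>A. (\<lambda>xs. x # xs) ` permutations_of_set (A - {x})). prod_list (map f xs))"
    unfolding P_def using permutations_of_set_nonempty[OF assms(2)] by simp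
  also have "\<dots> = (\<Sum>x\<in>A. \<Sum>xs\<in>(\<lambda>xs. x # xs) ` permutations_of_set (A - {x}). prod_list (map f xs))"
    by (rule sum.UNION_disjoint) (use assms in auto)
  also have "\<dots> = (\<Sum>m\<in>A. f m * P f (A - {m}))"
    unfolding P_def
    by (rule sum.cong[OF refl], subst sum.reindex) (auto simp: sum_distrib_left)
  finally show ?thesis .
qed

lemma perms_last:
  assumes "A \<noteq> {}"
  shows "permutations_of_set A = (\<Union>x\<in>A. (\<lambda>xs. xs @ [x]) ` permutations_of_set (A - {x}))"
proof -
  have "permutations_of_set A = rev ` permutations_of_set A" by simp
  also have "\<dots> = rev ` (\<Union>x\<in>A. (\<lambda>xs. x # xs) ` permutations_of_set (A - {x}))"
    using permutations_of_set_nonempty[OF assms] by simp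
  also have "\<dots> = (\<Union>x\<in>A. (\<lambda>xs. xs @ [x]) ` (rev ` permutations_of_set (A - {x})))"
    by (simp only: image_UN image_image rev.simps)
  also have "\<dots> = (\<Union>x\<in>A. (\<lambda>xs. xs @ [x]) ` permutations_of_set (A - {x}))"
    by simp
  finally show ?thesis .
qed

lemma P_last:
  assumes "finite A" "A \<noteq> {}"
  shows "P f A = (\<Sum>m\<in>A. P f (A - {m}) * f m)"
proof -
  have "P f A = (\<Sum>xs\<in>(\<Union>x\<in>A. (\<lambda>xs. xs @ [x]) ` permutations_of_set (A - {x})). prod_list (map f xs))"
    unfolding P_def using perms_last[OF assms(2)] by simp
  also have "\<dots> = (\<Sum>x\<in>A. \<Sum>xs\<in>(\<lambda>xs. xs @ [x]) ` permutations_of_set (A - {x}). prod_list (map f xs))"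
    by (rule sum.UNION_disjoint) (use assms in auto)
  also have "\<dots> = (\<Sum>m\<in>A. P f (A - {m}) * f m)"
    unfolding P_def
    by (rule sum.cong[OF refl], subst sum.reindex) (auto simp: sum_distrib_right inj_on_def)
  finally show ?thesis .
qed

lemma P_reindex:
  assumes "inj_on h B"
  shows "P f (h ` B) = P (f \<circ> h) B"
proof -
  have inj: "inj_on (map h) (permutations_of_set B)"
  proof (rule inj_onI)
    fix x y assume "x \<in> permutations_of_set B" "y \<in> permutations_of_set B" "map h x = map h y"
    moreover have "inj_on h (set x \<union> set y)" using assms calculation
      by (metis Un_absorb permutations_of_setD(1))
    ultimately show "x = y" using inj_on_map_eq_map by blast
  qed
  show ?thesis
    unfolding P_def permutations_of_set_image_inj[OF assms]
    by (subst sum.reindex[OF inj]) simp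
qed

lemma P_G:
  assumes "finite A" "a \<in> A"
  shows "P f A = P f (A - {a}) * f a + (\<Sum>i\<in>A - {a}. P (f(i := f a * f i)) (A - {a}))"
  using assms
proof (induction "card A" arbitrary: A rule: less_induct)
  case less
  define B where "B = A - {a}"
  have fB: "finite B" using less.prems B_def by auto
  have aB: "a \<notin> B" using B_def by auto
  let ?g = "\<lambda>i. f(i := f a * f i)"
  have A: "A = insert a B" using less.prems B_def by auto
  have "P f A = (\<Sum>l\<in>A. P f (A - {l}) * f l)"
    by (rule P_last) (use less.prems in auto)
  also have "\<dots> = P f B * f a + (\<Sum>l\<in>B. P f (A - {l}) * f l)"
    unfolding A using fB aB by (subst sum.insert) auto
  finally have eq0: "P f A = P f B * f a + (\<Sum>l\<in>B. P f (A - {l}) * f l)" .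
  have eq1: "(\<Sum>l\<in>B. P f (A - {l}) * f l) =
     (\<Sum>l\<in>B. P f (B - {l}) * f a * f l) + (\<Sum>l\<in>B. \<Sum>i\<in>B - {l}. P (?g i) (B - {l}) * f l)"
  proof -
    have "P f (A - {l}) * f l = P f (B - {l}) * f a * f l + (\<Sum>i\<in>B - {l}. P (?g i) (B - {l}) * f l)" if "l \<in> B" for l
    proof -
      have "card (A - {l}) < card A"
        by (rule card_Diff1_less) (use less.prems that B_def in auto)
      then have IH: "P f (A - {l}) = P f (A - {l} - {a}) * f a + (\<Sum>i\<in>A - {l} - {a}. P (?g i) (A - {l} - {a}))"
        by (rule less.hyps) (use less.prems that B_def in auto)
      have "A - {l} - {a} = B - {l}" using B_def by auto
      then have "P f (A - {l}) = P f (B - {l}) * f a + (\<Sum>i\<in>B - {l}. P (?g i) (B - {l}))"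
        using IH by simp
      then show ?thesis by (simp add: distrib_right sum_distrib_right)
    qed
    then have "(\<Sum>l\<in>B. P f (A - {l}) * f l) = (\<Sum>l\<in>B. P f (B - {l}) * f a * f l + (\<Sum>i\<in>B - {l}. P (?g i) (B - {l}) * f l))"
      by (rule sum.cong[OF refl])
    then show ?thesis by (simp only: sum.distrib)
  qed
  have eq2: "(\<Sum>i\<in>B. P (?g i) B) =
     (\<Sum>i\<in>B. P f (B - {i}) * (f a * f i)) + (\<Sum>i\<in>B. \<Sum>l\<in>B - {i}. P (?g i) (B - {l}) * f l)"
  proof -
    have "P (?g i) B = P f (B - {i}) * (f a * f i) + (\<Sum>l\<in>B - {i}. P (?g i) (B - {l}) * f l)"
      if "i \<in> B" for i
    proof -
      have e1: "P (?g i) B = (\<Sum>l\<in>B. P (?g i) (B - {l}) * ?g i l)"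
        by (rule P_last) (use fB that in auto)
      have e2: "(\<Sum>l\<in>B. P (?g i) (B - {l}) * ?g i l) = P (?g i) (B - {i}) * ?g i i + (\<Sum>l\<in>B - {i}. P (?g i) (B - {l}) * ?g i l)"
        by (rule sum.remove[OF fB that])
      have e3: "P (?g i) (B - {i}) = P f (B - {i})" by (rule P_cong) auto
      have e4: "(\<Sum>l\<in>B - {i}. P (?g i) (B - {l}) * ?g i l) = (\<Sum>l\<in>B - {i}. P (?g i) (B - {l}) * f l)"
        by (rule sum.cong) auto
      have e5: "?g i i = f a * f i" by simp
      show ?thesis unfolding e1 e2 e3 e4 e5 ..
    qed
    then have "(\<Sum>i\<in>B. P (?g i) B) = (\<Sum>i\<in>B. P f (B - {i}) * (f a * f i) + (\<Sum>l\<in>B - {i}. P (?g i) (B - {l}) * f l))"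
      by (rule sum.cong[OF refl])
    then show ?thesis by (simp only: sum.distrib)
  qed
  have eq3: "(\<Sum>i\<in>B. \<Sum>l\<in>B - {i}. P (?g i) (B - {l}) * f l) = (\<Sum>l\<in>B. \<Sum>i\<in>B - {l}. P (?g i) (B - {l}) * f l)"
  proof -
    have "(\<Sum>i\<in>B. \<Sum>l\<in>{l\<in>B. i \<noteq> l}. P (?g i) (B - {l}) * f l) = (\<Sum>l\<in>B. \<Sum>i\<in>{i\<in>B. i \<noteq> l}. P (?g i) (B - {l}) * f l)"
      by (rule sum.swap_restrict) (use fB in auto)
    moreover have "\<And>i. {l\<in>B. i \<noteq> l} = B - {i}" "\<And>l. {i\<in>B. i \<noteq> l} = B - {l}" by auto
    ultimately show ?thesis by simp
  qed
  have eq4: "(\<Sum>l\<in>B. P f (B - {l}) * f a * f l) = (\<Sum>i\<in>B. P f (B - {i}) * (f a * f i))"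
    by (simp add: mult.assoc)
  show ?case unfolding B_def[symmetric] eq0 eq1 eq2 eq3 eq4 by (simp add: add.assoc)
qed

lemma P_G2:
  assumes "finite A" "a \<in> A"
  shows "P f A = f a * P f (A - {a}) + (\<Sum>i\<in>A - {a}. P (f(i := f i * f a)) (A - {a}))"
  using assms
proof (induction "card A" arbitrary: A rule: less_induct)
  case less
  define B where "B = A - {a}"
  have fB: "finite B" using less.prems B_def by auto
  have aB: "a \<notin> B" using B_def by auto
  let ?g = "\<lambda>i. f(i := f i * f a)"
  have A: "A = insert a B" using less.prems B_def by auto
  have "P f A = (\<Sum>l\<in>A. f l * P f (A - {l}))"
    by (rule P_first) (use less.prems in auto)
  also have "\<dots> = f a * P f B + (\<Sum>l\<in>B. f l * P f (A - {l}))"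
    unfolding A using fB aB by (subst sum.insert) auto
  finally have eq0: "P f A = f a * P f B + (\<Sum>l\<in>B. f l * P f (A - {l}))" .
  have eq1: "(\<Sum>l\<in>B. f l * P f (A - {l})) =
     (\<Sum>l\<in>B. f l * f a * P f (B - {l})) + (\<Sum>l\<in>B. \<Sum>i\<in>B - {l}. f l * P (?g i) (B - {l}))"
  proof -
    have "f l * P f (A - {l}) = f l * f a * P f (B - {l}) + (\<Sum>i\<in>B - {l}. f l * P (?g i) (B - {l}))" if "l \<in> B" for l
    proof -
      have "card (A - {l}) < card A"
        by (rule card_Diff1_less) (use less.prems that B_def in auto)
      then have IH: "P f (A - {l}) = f a * P f (A - {l} - {a}) + (\<Sum>i\<in>A - {l} - {a}. P (?g i) (A - {l} - {a}))"
        by (rule less.hyps) (use less.prems that B_def in auto)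
      have "A - {l} - {a} = B - {l}" using B_def by auto
      then have "P f (A - {l}) = f a * P f (B - {l}) + (\<Sum>i\<in>B - {l}. P (?g i) (B - {l}))"
        using IH by simp
      then show ?thesis by (simp add: distrib_left sum_distrib_left mult.assoc)
    qed
    then have "(\<Sum>l\<in>B. f l * P f (A - {l})) = (\<Sum>l\<in>B. f l * f a * P f (B - {l}) + (\<Sum>i\<in>B - {l}. f l * P (?g i) (B - {l})))"
      by (rule sum.cong[OF refl])
    then show ?thesis by (simp only: sum.distrib)
  qed
  have eq2: "(\<Sum>i\<in>B. P (?g i) B) =
     (\<Sum>i\<in>B. (f i * f a) * P f (B - {i})) + (\<Sum>i\<in>B. \<Sum>l\<in>B - {i}. f l * P (?g i) (B - {l}))"
  proof -
    have "P (?g i) B = (f i * f a) * P f (B - {i}) + (\<Sum>l\<in>B - {i}. f l * P (?g i) (B - {l}))"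
      if "i \<in> B" for i
    proof -
      have e1: "P (?g i) B = (\<Sum>l\<in>B. ?g i l * P (?g i) (B - {l}))"
        by (rule P_first) (use fB that in auto)
      have e2: "(\<Sum>l\<in>B. ?g i l * P (?g i) (B - {l})) = ?g i i * P (?g i) (B - {i}) + (\<Sum>l\<in>B - {i}. ?g i l * P (?g i) (B - {l}))"
        by (rule sum.remove[OF fB that])
      have e3: "P (?g i) (B - {i}) = P f (B - {i})" by (rule P_cong) auto
      have e4: "(\<Sum>l\<in>B - {i}. ?g i l * P (?g i) (B - {l})) = (\<Sum>l\<in>B - {i}. f l * P (?g i) (B - {l}))"
        by (rule sum.cong) auto
      have e5: "?g i i = f i * f a" by simp
      show ?thesis unfolding e1 e2 e3 e4 e5 ..
    qed
    then have "(\<Sum>i\<in>B. P (?g i) B) = (\<Sum>i\<in>B. (f i * f a) * P f (B - {i}) + (\<Sum>l\<in>B - {i}. f l * P (?g i) (B - {l})))"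
      by (rule sum.cong[OF refl])
    then show ?thesis by (simp only: sum.distrib)
  qed
  have eq3: "(\<Sum>i\<in>B. \<Sum>l\<in>B - {i}. f l * P (?g i) (B - {l})) = (\<Sum>l\<in>B. \<Sum>i\<in>B - {l}. f l * P (?g i) (B - {l}))"
  proof -
    have "(\<Sum>i\<in>B. \<Sum>l\<in>{l\<in>B. i \<noteq> l}. f l * P (?g i) (B - {l})) = (\<Sum>l\<in>B. \<Sum>i\<in>{i\<in>B. i \<noteq> l}. f l * P (?g i) (B - {l}))"
      by (rule sum.swap_restrict) (use fB in auto)
    moreover have "\<And>i. {l\<in>B. i \<noteq> l} = B - {i}" "\<And>l. {i\<in>B. i \<noteq> l} = B - {l}" by auto
    ultimately show ?thesis by simp
  qed
  have eq4: "(\<Sum>l\<in>B. f l * f a * P f (B - {l})) = (\<Sum>i\<in>B. (f i * f a) * P f (B - {i}))"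
    by (simp add: mult.assoc)
  show ?case unfolding B_def[symmetric] eq0 eq1 eq2 eq3 by (simp add: add.assoc)
qed

lemma P_N:
  assumes "finite A" "card A = Suc d"
  shows "of_nat d * P f A = (\<Sum>m\<in>A. \<Sum>i\<in>A - {m}. P (f(i := f m * f i)) (A - {m}))"
proof -
  have ne: "A \<noteq> {}" using assms by auto
  have "of_nat (Suc d) * P f A = (\<Sum>m\<in>A. P f A)" using assms by simp
  also have "\<dots> = (\<Sum>m\<in>A. P f (A - {m}) * f m + (\<Sum>i\<in>A - {m}. P (f(i := f m * f i)) (A - {m})))"
    by (rule sum.cong[OF refl], rule P_G[OF assms(1)])
  also have "\<dots> = P f A + (\<Sum>m\<in>A. \<Sum>i\<in>A - {m}. P (f(i := f m * f i)) (A - {m}))"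
    by (simp add: sum.distrib P_last[OF assms(1) ne])
  finally show ?thesis by (simp add: distrib_right)
qed




lemma coef_Ser[simp]: "coef (Ser p) = p"
  by (simp add: Ser_inverse)

lemma coef_times: "coef (x * y) = fa_mult (coef x) (coef y)"
  by (simp add: times_ser.rep_eq conv_def fa_mult_def)
lemma coef_plus: "coef (x + y) = fa_add (coef x) (coef y)"
  by (simp add: plus_ser.rep_eq fa_add_def)
lemma coef_zero: "coef (0::'k::field ser) = fa_zero"
  by (simp add: zero_ser.rep_eq fa_zero_def)
lemma coef_plus_app[simp]: "coef (x + y) u = coef x u + coef y u"
  by (simp add: plus_ser.rep_eq)
lemma coef_minus_app[simp]: "coef (x - y) u = coef x u - coef y u"
  by (simp add: minus_ser.rep_eq)
lemma coef_zero_app[simp]: "coef 0 u = 0"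
  by (simp add: zero_ser.rep_eq)
lemma coef_one_app: "coef 1 u = (if u = [] then 1 else 0)"
  by (simp add: one_ser.rep_eq)
lemma coef_times_app: "coef (x * y) u = (\<Sum>i\<le>length u. coef x (take i u) * coef y (drop i u))"
  by (simp add: times_ser.rep_eq conv_def)

lemma coef_sum_app: "coef (sum h A) u = (\<Sum>a\<in>A. coef (h a) u)"
  by (induction A rule: infinite_finite_induct) auto

definition sc :: "'k::field \<Rightarrow> 'k ser" where
  "sc c = Ser (\<lambda>u. if u = [] then c else 0)"

lemma coef_sc_mult[simp]: "coef (sc c * x) u = c * coef x u"
proof -
  have "coef (sc c * x) u = (\<Sum>i\<in>{0}. coef (sc c) (take i u) * coef x (drop i u))"
    unfolding coef_times_app by (rule sum.mono_neutral_right) (auto simp: sc_def)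
  then show ?thesis by (simp add: sc_def)
qed

lemma coef_mult_sc[simp]: "coef (x * sc c) u = coef x u * c"
proof -
  have "coef (x * sc c) u = (\<Sum>i\<in>{length u}. coef x (take i u) * coef (sc c) (drop i u))"
    unfolding coef_times_app by (rule sum.mono_neutral_right) (auto simp: sc_def)
  then show ?thesis by (simp add: sc_def)
qed

lemma ser_eqI: "(\<And>u. coef x u = coef y u) \<Longrightarrow> x = y"
  by (simp add: coef_inject[symmetric] fun_eq_iff)

lemma sc_comm: "sc c * x = x * sc c"
  by (rule ser_eqI) (simp add: mult.commute)

lemma sc_left_comm: "x * (sc c * y) = sc c * (x * y)"
  by (metis mult.assoc sc_comm)

lemma sc_one[simp]: "sc 1 = 1"
  by (rule ser_eqI) (simp add: sc_def coef_one_app)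
lemma sc_zero[simp]: "sc 0 = 0"
  by (rule ser_eqI) (simp add: sc_def)
lemma sc_add: "sc (c + e) = sc c + sc e"
  by (rule ser_eqI) (simp add: sc_def)
lemma sc_mult: "sc (c * e) = sc c * sc e"
proof (rule ser_eqI)
  fix u
  have "coef (sc c * sc e) u = c * coef (sc e) u" by (rule coef_sc_mult)
  also have "\<dots> = coef (sc (c * e)) u" by (simp add: sc_def)
  finally show "coef (sc (c * e)) u = coef (sc c * sc e) u" by simp
qed
lemma sc_of_nat: "of_nat n = sc (of_nat n)"
proof (induction n)
  case (Suc n)
  have "(of_nat (Suc n) :: 'a ser) = 1 + of_nat n" by simp
  also have "\<dots> = sc 1 + sc (of_nat n)" using Suc by simp
  also have "\<dots> = sc (of_nat (Suc n))" by (simp add: sc_add)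
  finally show ?case .
qed simp

lemma sc_zero_mult[simp]: "sc 0 * x = 0" by simp

lemma fa_smult_coef: "fa_smult c p = coef (sc c * Ser p)"
  by (rule ext) (simp add: fa_smult_def)

lemma fa_mult_coef: "fa_mult p q = coef (Ser p * Ser q)"
  by (simp add: coef_times)
lemma fa_add_coef: "fa_add p q = coef (Ser p + Ser q)"
  by (simp add: coef_plus)

definition supp :: "'k::field ser \<Rightarrow> nat list set" where
  "supp x = {w. coef x w \<noteq> 0}"

definition Fin :: "'k::field ser set" where
  "Fin = {x. finite (supp x)}"

definition FAs :: "'k::field ser set" where
  "FAs = {x. coef x \<in> FA}"

lemma FAs_iff: "x \<in> FAs \<longleftrightarrow> x \<in> Fin \<and> coef x [] = 0"
  by (simp add: FAs_def Fin_def FA_def supp_def)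

lemma Fin_zero[simp]: "0 \<in> Fin" by (simp add: Fin_def supp_def)
lemma Fin_one[simp]: "1 \<in> Fin"
proof -
  have "supp (1::'k::field ser) \<subseteq> {[]}" by (auto simp: supp_def coef_one_app split: if_splits)
  then show ?thesis unfolding Fin_def by (auto intro: finite_subset[of _ "{[]}"])
qed
lemma Fin_add[simp]: "x \<in> Fin \<Longrightarrow> y \<in> Fin \<Longrightarrow> x + y \<in> Fin"
proof -
  assume "x \<in> Fin" "y \<in> Fin"
  moreover have "supp (x + y) \<subseteq> supp x \<union> supp y" by (auto simp: supp_def)
  ultimately show ?thesis by (simp add: Fin_def finite_subset)
qed
lemma Fin_sc[simp]: "x \<in> Fin \<Longrightarrow> sc c * x \<in> Fin"
proof -
  assume "x \<in> Fin"
  moreover have "supp (sc c * x) \<subseteq> supp x" by (auto simp: supp_def)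
  ultimately show ?thesis by (simp add: Fin_def finite_subset)
qed
lemma Fin_mult[simp]: "x \<in> Fin \<Longrightarrow> y \<in> Fin \<Longrightarrow> x * y \<in> Fin"
proof -
  assume "x \<in> Fin" "y \<in> Fin"
  moreover have "supp (x * y) \<subseteq> (\<lambda>(a,b). a @ b) ` (supp x \<times> supp y)"
  proof
    fix u assume "u \<in> supp (x * y)"
    then have "(\<Sum>i\<le>length u. coef x (take i u) * coef y (drop i u)) \<noteq> 0"
      by (simp add: supp_def coef_times_app)
    then obtain i where "coef x (take i u) * coef y (drop i u) \<noteq> 0"
      by (meson sum.not_neutral_contains_not_neutral)
    then have "(take i u, drop i u) \<in> supp x \<times> supp y" by (simp add: supp_def)
    moreover have "u = (\<lambda>(a,b). a @ b) (take i u, drop i u)" by simp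
    ultimately show "u \<in> (\<lambda>(a,b). a @ b) ` (supp x \<times> supp y)" by (rule rev_image_eqI)
  qed
  ultimately show ?thesis by (simp add: Fin_def finite_subset)
qed
lemma Fin_sum[simp]: "(\<And>a. a \<in> A \<Longrightarrow> h a \<in> Fin) \<Longrightarrow> sum h A \<in> Fin"
  by (induction A rule: infinite_finite_induct) auto
lemma Fin_prod_list: "(\<And>a. a \<in> set xs \<Longrightarrow> a \<in> Fin) \<Longrightarrow> prod_list xs \<in> Fin"
  by (induction xs) auto

lemma coef_times_nil: "coef (x * y) [] = coef x [] * coef y []"
  by (simp add: coef_times_app)

lemma FAs_mult1: "x \<in> FAs \<Longrightarrow> y \<in> Fin \<Longrightarrow> x * y \<in> FAs"
  by (simp add: FAs_iff coef_times_nil)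
lemma FAs_mult2: "x \<in> Fin \<Longrightarrow> y \<in> FAs \<Longrightarrow> x * y \<in> FAs"
  by (simp add: FAs_iff coef_times_nil)
lemma FAs_Fin: "x \<in> FAs \<Longrightarrow> x \<in> Fin" by (simp add: FAs_iff)
lemma FAs_add: "x \<in> FAs \<Longrightarrow> y \<in> FAs \<Longrightarrow> x + y \<in> FAs"
  by (simp add: FAs_iff)
lemma FAs_zero: "0 \<in> FAs" by (simp add: FAs_iff)
lemma FAs_sc: "x \<in> FAs \<Longrightarrow> sc c * x \<in> FAs"
  by (simp add: FAs_iff)
lemma FAs_sum: "(\<And>a. a \<in> A \<Longrightarrow> h a \<in> FAs) \<Longrightarrow> sum h A \<in> FAs"
  by (induction A rule: infinite_finite_induct) (auto simp: FAs_zero FAs_add)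
lemma Ser_FAs: "p \<in> FA \<Longrightarrow> Ser p \<in> FAs" by (simp add: FAs_def)




definition mon :: "nat list \<Rightarrow> 'k::field ser" where
  "mon w = Ser (\<lambda>u. if u = w then 1 else 0)"

lemma coef_mon: "coef (mon w) u = (if u = w then 1 else 0)"
  by (simp add: mon_def)

lemma supp_mon: "supp (mon w :: 'k::field ser) = {w}"
  by (auto simp: supp_def coef_mon)

lemma Fin_mon[simp]: "mon w \<in> Fin"
  by (simp add: Fin_def supp_mon)

lemma mon_mult: "mon a * mon b = (mon (a @ b) :: 'k::field ser)"
proof (rule ser_eqI)
  fix u
  have t: "(take i u = a \<and> drop i u = b) \<longleftrightarrow> (i = length a \<and> u = a @ b)" if "i \<le> length u" for i
  proof
    assume h: "take i u = a \<and> drop i u = b"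
    then have "length a = i" using that by auto
    then show "i = length a \<and> u = a @ b" using h by (metis append_take_drop_id)
  qed auto
  have "coef (mon a * mon b :: 'k ser) u = (\<Sum>i\<le>length u. if i = length a \<and> u = a @ b then 1 else 0)"
    unfolding coef_times_app coef_mon
    by (rule sum.cong[OF refl]) (use t in auto)
  also have "\<dots> = (if u = a @ b then 1 else 0)"
    by (cases "u = a @ b") auto
  finally show "coef (mon a * mon b :: 'k ser) u = coef (mon (a @ b)) u"
    by (simp add: coef_mon)
qed

lemma expansion: "x \<in> Fin \<Longrightarrow> x = (\<Sum>w\<in>supp x. sc (coef x w) * mon w)"
proof (rule ser_eqI)
  fix u assume "x \<in> Fin"
  then have f: "finite (supp x)" by (simp add: Fin_def)
  have "coef (\<Sum>w\<in>supp x. sc (coef x w) * mon w) u = (\<Sum>w\<in>supp x. if u = w then coef x w else 0)"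
    unfolding coef_sum_app by (rule sum.cong) (auto simp: coef_mon)
  also have "\<dots> = coef x u" using f by (auto simp: supp_def)
  finally show "coef x u = coef (\<Sum>w\<in>supp x. sc (coef x w) * mon w) u" by simp
qed

definition wimg :: "(nat \<Rightarrow> 'k::field fa) \<Rightarrow> nat list \<Rightarrow> 'k ser" where
  "wimg g w = prod_list (map (\<lambda>i. Ser (g i)) w)"

lemma wimg_append: "wimg g (a @ b) = wimg g a * wimg g b"
  by (simp add: wimg_def)

definition L :: "(nat \<Rightarrow> 'k::field fa) \<Rightarrow> 'k ser \<Rightarrow> 'k ser" where
  "L g x = (\<Sum>w\<in>supp x. sc (coef x w) * wimg g w)"

lemma L_superset:
  assumes "finite A" "supp x \<subseteq> A"
  shows "L g x = (\<Sum>w\<in>A. sc (coef x w) * wimg g w)"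
  unfolding L_def
  by (rule sum.mono_neutral_left) (use assms in \<open>auto simp: supp_def\<close>)

lemma L_add: "x \<in> Fin \<Longrightarrow> y \<in> Fin \<Longrightarrow> L g (x + y) = L g x + L g y"
proof -
  assume "x \<in> Fin" "y \<in> Fin"
  then have f: "finite (supp x \<union> supp y)" by (simp add: Fin_def)
  have s: "supp (x + y) \<subseteq> supp x \<union> supp y" by (auto simp: supp_def)
  have sx: "supp x \<subseteq> supp x \<union> supp y" and sy: "supp y \<subseteq> supp x \<union> supp y" by auto
  show ?thesis
    unfolding L_superset[OF f s] L_superset[OF f sx] L_superset[OF f sy]
    by (auto simp: sc_add distrib_right sum.distrib)
qed

lemma L_sc: "x \<in> Fin \<Longrightarrow> L g (sc c * x) = sc c * L g x"
proof -
  assume "x \<in> Fin"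
  then have f: "finite (supp x)" by (simp add: Fin_def)
  have s: "supp (sc c * x) \<subseteq> supp x" by (auto simp: supp_def)
  have "L g (sc c * x) = (\<Sum>w\<in>supp x. sc (coef (sc c * x) w) * wimg g w)"
    by (rule L_superset[OF f s])
  then show ?thesis
    unfolding L_def
    by (simp add: sc_mult sum_distrib_left mult.assoc)
qed

lemma L_zero: "L g 0 = 0"
  by (simp add: L_def supp_def)

lemma L_sum: "(\<And>a. a \<in> A \<Longrightarrow> h a \<in> Fin) \<Longrightarrow> L g (sum h A) = (\<Sum>a\<in>A. L g (h a))"
  by (induction A rule: infinite_finite_induct) (auto simp: L_zero L_add)

lemma L_mon: "L g (mon w) = wimg g w"
  by (simp add: L_def supp_mon coef_mon)

lemma L_sc_mon: "L g (sc c * mon w) = sc c * wimg g w"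
  by (simp add: L_sc L_mon)

lemma L_mult_mon: "y \<in> Fin \<Longrightarrow> L g (mon a * y) = wimg g a * L g y"
proof -
  assume y: "y \<in> Fin"
  have "mon a * y = mon a * (\<Sum>w\<in>supp y. sc (coef y w) * mon w)"
    using expansion[OF y] by simp
  also have "\<dots> = (\<Sum>w\<in>supp y. sc (coef y w) * mon (a @ w))"
    by (simp add: sum_distrib_left mon_mult sc_left_comm)
  finally have "L g (mon a * y) = (\<Sum>w\<in>supp y. sc (coef y w) * wimg g (a @ w))"
    by (simp add: L_sum L_sc_mon)
  also have "\<dots> = wimg g a * L g y"
    unfolding L_def wimg_append
    by (simp add: sum_distrib_left mult.assoc sc_left_comm)
  finally show ?thesis .
qed

lemma L_mult: "x \<in> Fin \<Longrightarrow> y \<in> Fin \<Longrightarrow> L g (x * y) = L g x * L g y"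
proof -
  assume x: "x \<in> Fin" and y: "y \<in> Fin"
  have "x * y = (\<Sum>w\<in>supp x. sc (coef x w) * (mon w * y))"
    by (subst expansion[OF x]) (simp add: sum_distrib_right mult.assoc)
  then have "L g (x * y) = (\<Sum>w\<in>supp x. sc (coef x w) * (wimg g w * L g y))"
    using y by (simp add: L_sum L_sc L_mult_mon)
  also have "\<dots> = L g x * L g y"
    by (simp add: L_def sum_distrib_right mult.assoc)
  finally show ?thesis .
qed




lemma Ser_coef[simp]: "Ser (coef x) = x" by (rule coef_inverse)

lemma Ser_fa_add: "Ser (fa_add p q) = Ser p + Ser q" by (simp add: fa_add_coef)
lemma Ser_fa_mult: "Ser (fa_mult p q) = Ser p * Ser q" by (simp add: fa_mult_coef)
lemma Ser_fa_smult: "Ser (fa_smult c p) = sc c * Ser p" by (simp add: fa_smult_coef)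
lemma Ser_fa_zero: "Ser fa_zero = 0" by (metis coef_zero Ser_coef)
lemma Ser_fa_var: "Ser (fa_var i) = mon [i]" by (simp add: fa_var_def mon_def)

lemma FA_FAs: "p \<in> FA \<longleftrightarrow> Ser p \<in> FAs" by (simp add: FAs_def)

definition subst :: "(nat \<Rightarrow> 'k::field fa) \<Rightarrow> 'k fa \<Rightarrow> 'k fa" where
  "subst g p = coef (L g (Ser p))"

lemma wimg_FAs: "(\<And>i. g i \<in> FA) \<Longrightarrow> w \<noteq> [] \<Longrightarrow> wimg g w \<in> FAs"
proof (cases w)
  case (Cons i w')
  assume "\<And>i. g i \<in> FA"
  then have a: "Ser (g i) \<in> FAs" for i by (simp add: FA_FAs[symmetric])
  have "wimg g w' \<in> Fin" unfolding wimg_def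
    by (rule Fin_prod_list) (auto intro: FAs_Fin a)
  then have "Ser (g i) * wimg g w' \<in> FAs" by (rule FAs_mult1[OF a])
  then show ?thesis using Cons by (simp add: wimg_def)
qed simp

lemma L_FAs: "(\<And>i. g i \<in> FA) \<Longrightarrow> x \<in> FAs \<Longrightarrow> L g x \<in> FAs"
  unfolding L_def
  by (rule FAs_sum, rule FAs_sc, rule wimg_FAs) (auto simp: FAs_iff supp_def)

lemma subst_endo:
  fixes g :: "nat \<Rightarrow> 'k::field fa"
  assumes g: "\<And>i. g i \<in> FA"
  shows "fa_endo (subst g)"
  unfolding fa_endo_def subst_def
proof (intro conjI ballI allI)
  fix p :: "'k fa" assume "p \<in> FA"
  then show "coef (L g (Ser p)) \<in> FA" using L_FAs[OF g] by (simp add: FA_FAs)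
next
  fix p q :: "'k fa" assume "p \<in> FA" "q \<in> FA"
  then have "Ser p \<in> Fin" "Ser q \<in> Fin" by (auto simp: FA_FAs FAs_Fin)
  then show "coef (L g (Ser (fa_add p q))) = fa_add (coef (L g (Ser p))) (coef (L g (Ser q)))"
    "coef (L g (Ser (fa_mult p q))) = fa_mult (coef (L g (Ser p))) (coef (L g (Ser q)))"
    by (simp_all add: Ser_fa_add Ser_fa_mult L_add L_mult coef_plus coef_times)
next
  fix c and p :: "'k fa" assume "p \<in> FA"
  then have "Ser p \<in> Fin" by (auto simp: FA_FAs FAs_Fin)
  then show "coef (L g (Ser (fa_smult c p))) = fa_smult c (coef (L g (Ser p)))"
    by (simp add: Ser_fa_smult L_sc fa_smult_coef)
qed

lemma subst_var: "subst g (fa_var i) = g i"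
  by (simp add: subst_def Ser_fa_var L_mon wimg_def)

lemma FA_zero: "fa_zero \<in> FA" by (simp add: FA_FAs Ser_fa_zero FAs_zero)
lemma FA_add: "p \<in> FA \<Longrightarrow> q \<in> FA \<Longrightarrow> fa_add p q \<in> FA"
  by (simp add: FA_FAs Ser_fa_add FAs_add)
lemma FA_smult: "p \<in> FA \<Longrightarrow> fa_smult c p \<in> FA"
  by (simp add: FA_FAs Ser_fa_smult FAs_sc)
lemma FA_mult: "p \<in> FA \<Longrightarrow> q \<in> FA \<Longrightarrow> fa_mult p q \<in> FA"
  by (simp add: FA_FAs Ser_fa_mult FAs_mult1 FAs_Fin)
lemma FA_var: "fa_var i \<in> FA"
  by (simp add: FA_FAs Ser_fa_var FAs_iff coef_mon)

lemma endo_zero: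
  assumes "fa_endo f" shows "f fa_zero = fa_zero"
proof -
  have "f (fa_add fa_zero fa_zero) = fa_add (f fa_zero) (f fa_zero)"
    using assms FA_zero unfolding fa_endo_def by blast
  moreover have "fa_add fa_zero fa_zero = fa_zero" by (simp add: fa_add_def fa_zero_def)
  ultimately have "\<And>w. f fa_zero w = f fa_zero w + f fa_zero w" by (metis fa_add_def)
  then have "\<And>w. f fa_zero w = 0" by (metis add_cancel_right_right)
  then show ?thesis by (auto simp: fa_zero_def)
qed

lemma endo_sum:
  assumes "fa_endo f" "finite S" "\<And>s. s \<in> S \<Longrightarrow> h s \<in> FA"
  shows "f (\<lambda>w. \<Sum>s\<in>S. h s w) = (\<lambda>w. \<Sum>s\<in>S. f (h s) w) \<and> (\<lambda>w. \<Sum>s\<in>S. h s w) \<in> FA"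
  using assms(2,3)
proof (induction S rule: finite_induct)
  case empty
  then show ?case using endo_zero[OF assms(1)] FA_zero by (simp add: fa_zero_def)
next
  case (insert s S)
  have e: "(\<lambda>w. \<Sum>s\<in>insert s S. h s w) = fa_add (h s) (\<lambda>w. \<Sum>s\<in>S. h s w)"
    using insert by (simp add: fa_add_def)
  have IH: "f (\<lambda>w. \<Sum>s\<in>S. h s w) = (\<lambda>w. \<Sum>s\<in>S. f (h s) w)" "(\<lambda>w. \<Sum>s\<in>S. h s w) \<in> FA"
    using insert by auto
  have hs: "h s \<in> FA" using insert by auto
  show ?case unfolding e using assms(1) IH hs insert(1,2)
    by (simp add: fa_endo_def fa_add_def FA_add[OF hs IH(2), unfolded fa_add_def])
qed

lemma fa_prod_Cons: "vs \<noteq> [] \<Longrightarrow> fa_prod (v # vs) = fa_mult v (fa_prod vs)"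
  by (cases vs) auto

lemma endo_prod:
  assumes "fa_endo f" "vs \<noteq> []" "\<And>v. v \<in> set vs \<Longrightarrow> v \<in> FA"
  shows "f (fa_prod vs) = fa_prod (map f vs) \<and> fa_prod vs \<in> FA"
  using assms(2,3)
proof (induction vs rule: fa_prod.induct)
  case (3 v v' vs)
  then have IH: "f (fa_prod (v' # vs)) = fa_prod (map f (v' # vs))" "fa_prod (v' # vs) \<in> FA" by auto
  have "v \<in> FA" using 3 by auto
  then show ?case using IH assms(1) by (simp add: fa_endo_def FA_mult)
qed auto

lemma fa_prod_coef: "vs \<noteq> [] \<Longrightarrow> fa_prod vs = coef (prod_list (map Ser vs))"
proof (induction vs rule: fa_prod.induct)
  case (3 v v' vs)
  then show ?case by (simp add: coef_times)
qed auto




lemma perm_sum_reindex: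
  "(\<Sum>s\<in>{s. s permutes {..<d}}. G (map s [0..<d])) = (\<Sum>xs\<in>permutations_of_set {..<d}. G xs)"
proof (rule sum.reindex_bij_witness[where i = "\<lambda>xs j. if j < d then xs ! j else j" and j = "\<lambda>s. map s [0..<d]"])
  fix s assume "s \<in> {s. s permutes {..<d}}"
  then have s: "s permutes {..<d}" by simp
  show "(\<lambda>j. if j < d then map s [0..<d] ! j else j) = s"
    using s by (auto simp: permutes_def fun_eq_iff)
  have "inj_on s {..<d}" using s by (simp add: permutes_inj_on)
  then have "distinct (map s [0..<d])" by (simp add: distinct_map inj_on_subset atLeast0LessThan)
  moreover have "set (map s [0..<d]) = {..<d}" using s by (simp add: atLeast0LessThan permutes_image)
  ultimately show "map s [0..<d] \<in> permutations_of_set {..<d}" by auto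
next
  fix xs assume xs: "xs \<in> permutations_of_set {..<d}"
  then have set: "set xs = {..<d}" and dis: "distinct xs" by (auto dest: permutations_of_setD)
  then have len: "length xs = d" using distinct_card by fastforce
  have m: "map (\<lambda>j. if j < d then xs ! j else j) [0..<d] = xs"
    using len by (simp add: list_eq_iff_nth_eq)
  then show "map (\<lambda>j. if j < d then xs ! j else j) [0..<d] = xs" by simp
  have "bij_betw (\<lambda>j. if j < d then xs ! j else j) {..<d} {..<d}"
  proof -
    have "bij_betw (\<lambda>j. xs ! j) {..<d} {..<d}"
      using bij_betw_nth[OF dis, of "{..<d}"] len set by (simp add: lessThan_def)
    then show ?thesis by (rule bij_betw_cong[THEN iffD1, rotated]) auto
  qed
  then have "(\<lambda>j. if j < d then xs ! j else j) permutes {..<d}"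
    by (rule bij_imp_permutes) auto
  then show "(\<lambda>j. if j < d then xs ! j else j) \<in> {s. s permutes {..<d}}" by simp
qed simp

lemma S_poly_P:
  assumes "d > 0"
  shows "S_poly d v = coef (P (Ser \<circ> v) {..<d})"
proof -
  have "S_poly d v = (\<lambda>w. \<Sum>s\<in>{s. s permutes {..<d}}. coef (prod_list (map Ser (map (v \<circ> s) [0..<d]))) w)"
    unfolding S_poly_def using assms by (subst fa_prod_coef) auto
  also have "\<dots> = coef (\<Sum>s\<in>{s. s permutes {..<d}}. prod_list (map (Ser \<circ> v) (map s [0..<d])))"
    by (simp add: coef_sum_app fun_eq_iff map_map comp_assoc)
  also have "\<dots> = coef (P (Ser \<circ> v) {..<d})"
    unfolding P_def by (subst perm_sum_reindex) simp
  finally show ?thesis .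
qed

lemma endo_S:
  assumes "fa_endo f" "d > 0" "\<And>i. v i \<in> FA"
  shows "f (S_poly d v) = S_poly d (f \<circ> v) \<and> S_poly d v \<in> FA"
proof -
  let ?h = "\<lambda>s. fa_prod (map (v \<circ> s) [0..<d])"
  have h: "?h s \<in> FA \<and> f (?h s) = fa_prod (map (f \<circ> v \<circ> s) [0..<d])" for s
    using endo_prod[OF assms(1), of "map (v \<circ> s) [0..<d]"] assms by (auto simp: o_assoc)
  have fin: "finite {s. s permutes {..<d}}" by (simp add: finite_permutations)
  have "f (\<lambda>w. \<Sum>s\<in>{s. s permutes {..<d}}. ?h s w) = (\<lambda>w. \<Sum>s\<in>{s. s permutes {..<d}}. f (?h s) w)
     \<and> (\<lambda>w. \<Sum>s\<in>{s. s permutes {..<d}}. ?h s w) \<in> FA"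
    by (rule endo_sum[OF assms(1) fin]) (use h in auto)
  then show ?thesis unfolding S_poly_def using h by simp
qed

lemma fa_endo_id: "fa_endo (\<lambda>p. p)" by (simp add: fa_endo_def)

lemma S_FA: "d > 0 \<Longrightarrow> (\<And>i. v i \<in> FA) \<Longrightarrow> S_poly d v \<in> FA"
  using endo_S[OF fa_endo_id] by blast

lemma subspace_FA: "fa_subspace FA"
  by (simp add: fa_subspace_def FA_zero FA_add FA_smult)

lemma T_space_FA: "T_space FA"
  by (simp add: T_space_def subspace_FA fa_endo_def)

lemma T_gen_sub: "S \<subseteq> T_gen S"
  by (auto simp: T_gen_def)

lemma T_gen_least: "T_space V \<Longrightarrow> S \<subseteq> V \<Longrightarrow> T_gen S \<subseteq> V"
  by (auto simp: T_gen_def)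

lemma T_gen_T_space:
  assumes "S \<subseteq> FA" shows "T_space (T_gen S)"
proof -
  have ne: "FA \<in> {V. T_space V \<and> S \<subseteq> V}" using assms T_space_FA by simp
  have a: "T_gen S \<subseteq> FA" unfolding T_gen_def using ne by blast
  have b: "fa_zero \<in> T_gen S" unfolding T_gen_def by (auto simp: T_space_def fa_subspace_def)
  have c: "\<forall>p\<in>T_gen S. \<forall>q\<in>T_gen S. fa_add p q \<in> T_gen S"
    unfolding T_gen_def by (auto simp: T_space_def fa_subspace_def)
  have d: "\<forall>c. \<forall>p\<in>T_gen S. fa_smult c p \<in> T_gen S"
    unfolding T_gen_def by (auto simp: T_space_def fa_subspace_def)
  have e: "\<forall>f. fa_endo f \<longrightarrow> (\<forall>p\<in>T_gen S. f p \<in> T_gen S)"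
    unfolding T_gen_def by (auto simp: T_space_def)
  show ?thesis using a b c d e by (simp add: T_space_def fa_subspace_def)
qed

lemma R1_T_space: "d > 0 \<Longrightarrow> T_space (R1 d)"
  unfolding R1_def by (rule T_gen_T_space) (use S_FA FA_var in auto)

lemma S_R1:
  fixes g :: "nat \<Rightarrow> 'k::field fa"
  assumes "d > 0" "\<And>i. g i \<in> FA"
  shows "S_poly d g \<in> (R1 d :: 'k fa set)"
proof -
  have E: "fa_endo (subst g)" by (rule subst_endo) (rule assms(2))
  have x: "S_poly d fa_var \<in> (R1 d :: 'k fa set)" unfolding R1_def using T_gen_sub by blast
  have "subst g (S_poly d fa_var) = S_poly d (subst g \<circ> fa_var)"
    using endo_S[OF E assms(1), of fa_var] FA_var by blast
  also have "subst g \<circ> fa_var = g" by (simp add: fun_eq_iff subst_var)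
  finally have "subst g (S_poly d fa_var) = S_poly d g" .
  moreover have "subst g (S_poly d fa_var) \<in> R1 d"
    using R1_T_space[OF assms(1)] E x unfolding T_space_def by blast
  ultimately show ?thesis by simp
qed




definition Rm :: "nat \<Rightarrow> 'k::field ser set" where
  "Rm d = {x. coef x \<in> R1 d}"

lemma R1_sub:
  assumes "d > 0" shows "fa_subspace (R1 d :: 'k::field fa set)"
proof -
  have "T_space (R1 d :: 'k fa set)" by (rule R1_T_space[OF assms])
  then show ?thesis by (simp add: T_space_def)
qed

lemma Rm_zero:
  assumes "d > 0" shows "0 \<in> (Rm d :: 'k::field ser set)"
proof -
  have "fa_subspace (R1 d :: 'k fa set)" by (rule R1_sub[OF assms])
  then show ?thesis by (simp add: Rm_def coef_zero fa_subspace_def)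
qed
lemma Rm_add:
  assumes "d > 0" "x \<in> Rm d" "y \<in> Rm d" shows "x + y \<in> (Rm d :: 'k::field ser set)"
proof -
  have "fa_subspace (R1 d :: 'k fa set)" by (rule R1_sub[OF assms(1)])
  then show ?thesis using assms(2,3) by (simp add: Rm_def coef_plus fa_subspace_def)
qed
lemma Rm_sc:
  assumes "d > 0" "x \<in> Rm d" shows "sc c * x \<in> (Rm d :: 'k::field ser set)"
proof -
  have "fa_subspace (R1 d :: 'k fa set)" by (rule R1_sub[OF assms(1)])
  then have "fa_smult c (coef x) \<in> R1 d" using assms(2) by (simp add: Rm_def fa_subspace_def)
  then show ?thesis by (simp add: Rm_def fa_smult_coef)
qed
lemma Rm_diff:
  assumes "d > 0" "x \<in> Rm d" "y \<in> Rm d" shows "x - y \<in> (Rm d :: 'k::field ser set)"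
proof -
  have e: "x - y = x + sc (-1) * y" by (rule ser_eqI) simp
  have "sc (-1) * y \<in> Rm d" by (rule Rm_sc[OF assms(1,3)])
  then show ?thesis using Rm_add[OF assms(1,2)] e by metis
qed
lemma Rm_sum: "d > 0 \<Longrightarrow> (\<And>a. a \<in> A \<Longrightarrow> h a \<in> Rm d) \<Longrightarrow> sum h A \<in> Rm d"
  by (induction A rule: infinite_finite_induct) (auto simp: Rm_zero Rm_add)

lemma Rm_gen:
  fixes h :: "nat \<Rightarrow> 'k::field ser"
  assumes d: "d > 0" and B: "finite B" "card B = d" and h: "\<And>i. h i \<in> FAs"
  shows "P h B \<in> Rm d"
proof -
  obtain e where e: "bij_betw e {0..<card B} B" using ex_bij_betw_nat_finite[OF B(1)] by blast
  then have e': "bij_betw e {..<d} B" using B by (simp add: atLeast0LessThan)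
  define v where "v i = (if i < d then coef (h (e i)) else fa_zero)" for i
  have v: "v i \<in> FA" for i using h by (simp add: v_def FAs_def FA_zero)
  have "P h B = P h (e ` {..<d})" using e' by (simp add: bij_betw_def)
  also have "\<dots> = P (h \<circ> e) {..<d}" by (rule P_reindex) (use e' in \<open>simp add: bij_betw_def\<close>)
  also have "\<dots> = P (Ser \<circ> v) {..<d}" by (rule P_cong) (simp add: v_def)
  finally have "coef (P h B) = S_poly d v" using S_poly_P[OF d, of v] by simp
  then show ?thesis using S_R1[OF d v] by (simp add: Rm_def)
qed

lemma FAs_upd: "(\<And>i. f i \<in> FAs) \<Longrightarrow> x \<in> FAs \<Longrightarrow> (f(j := x)) i \<in> FAs"
  by simp

lemma inv_d:
  assumes "(of_nat d :: 'k::field) \<noteq> 0"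
  shows "sc (1 / of_nat d) * (of_nat d * x) = (x :: 'k ser)"
proof -
  have "sc (1 / of_nat d) * (of_nat d * x) = sc (1 / of_nat d) * (sc (of_nat d) * x)"
    by (metis sc_of_nat)
  also have "\<dots> = sc (1 / of_nat d * of_nat d) * x" by (simp only: sc_mult mult.assoc)
  also have "\<dots> = x" using assms by simp
  finally show ?thesis .
qed

lemma big_Rm:
  fixes f :: "nat \<Rightarrow> 'k::field ser"
  assumes d: "d > 0" "(of_nat d :: 'k) \<noteq> 0" and f: "\<And>i. f i \<in> FAs"
  shows "P f {..d} \<in> Rm d"
proof -
  have "of_nat d * P f {..d} = (\<Sum>m\<in>{..d}. \<Sum>i\<in>{..d} - {m}. P (f(i := f m * f i)) ({..d} - {m}))"
    by (rule P_N) auto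
  moreover have "(\<Sum>m\<in>{..d}. \<Sum>i\<in>{..d} - {m}. P (f(i := f m * f i)) ({..d} - {m})) \<in> Rm d"
  proof (intro Rm_sum[OF d(1)])
    fix m i assume "m \<in> {..d}"
    then have c: "card ({..d} - {m}) = d" by simp
    have "f m * f i \<in> FAs" using f by (simp add: FAs_mult1 FAs_Fin)
    then show "P (f(i := f m * f i)) ({..d} - {m}) \<in> Rm d"
      by (intro Rm_gen[OF d(1) _ c]) (auto simp: f)
  qed
  ultimately have "of_nat d * P f {..d} \<in> Rm d" by simp
  then have "sc (1 / of_nat d) * (of_nat d * P f {..d}) \<in> Rm d" by (rule Rm_sc[OF d(1)])
  then show ?thesis using inv_d[OF d(2)] by simp
qed

lemma atMost_minus: "{..d} - {d} = {..<(d::nat)}" by auto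

lemma ideal_gen:
  fixes v :: "nat \<Rightarrow> 'k::field fa"
  assumes d: "d > 0" "(of_nat d :: 'k) \<noteq> 0" and v: "\<And>i. v i \<in> FA" and a: "a \<in> FA"
  shows "fa_mult a (S_poly d v) \<in> R1 d \<and> fa_mult (S_poly d v) a \<in> R1 d"
proof -
  define f where "f = (Ser \<circ> v)(d := Ser a)"
  have f: "f i \<in> FAs" for i using v a by (simp add: f_def FA_FAs[symmetric])
  have PF: "P f {..<d} = P (Ser \<circ> v) {..<d}" by (rule P_cong) (simp add: f_def)
  have big: "P f {..d} \<in> Rm d" by (rule big_Rm[OF d f])
  have fd: "f d = Ser a" by (simp add: f_def)
  have g1: "(\<Sum>i\<in>{..<d}. P (f(i := f i * f d)) {..<d}) \<in> Rm d"
    by (rule Rm_sum[OF d(1)], rule Rm_gen[OF d(1)]) (auto simp: f FAs_mult1 FAs_Fin)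
  have g2: "(\<Sum>i\<in>{..<d}. P (f(i := f d * f i)) {..<d}) \<in> Rm d"
    by (rule Rm_sum[OF d(1)], rule Rm_gen[OF d(1)]) (auto simp: f FAs_mult1 FAs_Fin)
  have e1: "P f {..d} = f d * P f {..<d} + (\<Sum>i\<in>{..<d}. P (f(i := f i * f d)) {..<d})"
    using P_G2[of "{..d}" d f] by (simp add: atMost_minus)
  have e2: "P f {..d} = P f {..<d} * f d + (\<Sum>i\<in>{..<d}. P (f(i := f d * f i)) {..<d})"
    using P_G[of "{..d}" d f] by (simp add: atMost_minus)
  have "Ser a * P (Ser \<circ> v) {..<d} \<in> Rm d"
  proof -
    have "Ser a * P (Ser \<circ> v) {..<d} = P f {..d} - (\<Sum>i\<in>{..<d}. P (f(i := f i * f d)) {..<d})"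
      using e1 PF fd by simp
    then show ?thesis using Rm_diff[OF d(1) big g1] by simp
  qed
  moreover have "P (Ser \<circ> v) {..<d} * Ser a \<in> Rm d"
  proof -
    have "P (Ser \<circ> v) {..<d} * Ser a = P f {..d} - (\<Sum>i\<in>{..<d}. P (f(i := f d * f i)) {..<d})"
      using e2 PF fd by simp
    then show ?thesis using Rm_diff[OF d(1) big g2] by simp
  qed
  ultimately show ?thesis
    by (simp add: Rm_def S_poly_P[OF d(1)] coef_times)
qed

inductive_set V0 :: "nat \<Rightarrow> 'k::field fa set" for d where
  gen: "(\<And>i. v i \<in> FA) \<Longrightarrow> S_poly d v \<in> V0 d"
| zero: "fa_zero \<in> V0 d"
| add: "p \<in> V0 d \<Longrightarrow> q \<in> V0 d \<Longrightarrow> fa_add p q \<in> V0 d"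
| smul: "p \<in> V0 d \<Longrightarrow> fa_smult c p \<in> V0 d"

lemma V0_FA:
  assumes "d > 0" "p \<in> V0 d" shows "p \<in> FA"
  using assms(2) by (induction rule: V0.induct) (auto simp: S_FA[OF assms(1)] FA_zero FA_add FA_smult)

lemma V0_T_space:
  assumes d: "d > 0" shows "T_space (V0 d :: 'k::field fa set)"
  unfolding T_space_def fa_subspace_def
proof (intro conjI allI impI ballI)
  show "V0 d \<subseteq> FA" using V0_FA[OF d] by blast
  show "fa_zero \<in> V0 d" by (rule V0.zero)
  show "\<And>p q. p \<in> V0 d \<Longrightarrow> q \<in> V0 d \<Longrightarrow> fa_add p q \<in> V0 d" by (rule V0.add)
  show "\<And>c p. p \<in> V0 d \<Longrightarrow> fa_smult c p \<in> V0 d" by (rule V0.smul)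
  fix f :: "'k fa \<Rightarrow> 'k fa" and p :: "'k fa" assume f: "fa_endo f" and p: "p \<in> V0 d"
  from p show "f p \<in> V0 d"
  proof (induction rule: V0.induct)
    case (gen v)
    have "f (S_poly d v) = S_poly d (f \<circ> v)" using endo_S[OF f d] gen by blast
    moreover have "(f \<circ> v) i \<in> FA" for i using f gen by (simp add: fa_endo_def)
    ultimately show ?case by (simp add: V0.gen)
  next
    case zero
    then show ?case using endo_zero[OF f] by (simp add: V0.zero)
  next
    case (add p q)
    then have "p \<in> FA" "q \<in> FA" using V0_FA[OF d] by auto
    then show ?case using add f by (simp add: fa_endo_def V0.add)
  next
    case (smul p c)
    then have "p \<in> FA" using V0_FA[OF d] by auto
    then show ?case using smul f by (simp add: fa_endo_def V0.smul)
  qed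
qed

lemma R1_V0: "d > 0 \<Longrightarrow> R1 d \<subseteq> V0 d"
  unfolding R1_def by (rule T_gen_least[OF V0_T_space]) (auto intro: V0.gen FA_var)

lemma Ser_eqD: "Ser p = Ser q \<Longrightarrow> p = q"
  by (metis coef_Ser)

lemma fa_mult_add_right: "fa_mult a (fa_add p q) = fa_add (fa_mult a p) (fa_mult a q)"
  by (rule Ser_eqD) (simp add: Ser_fa_mult Ser_fa_add distrib_left)
lemma fa_mult_add_left: "fa_mult (fa_add p q) a = fa_add (fa_mult p a) (fa_mult q a)"
  by (rule Ser_eqD) (simp add: Ser_fa_mult Ser_fa_add distrib_right)
lemma fa_mult_smult_right: "fa_mult a (fa_smult c p) = fa_smult c (fa_mult a p)"
  by (rule Ser_eqD) (simp add: Ser_fa_mult Ser_fa_smult sc_left_comm)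
lemma fa_mult_smult_left: "fa_mult (fa_smult c p) a = fa_smult c (fa_mult p a)"
  by (rule Ser_eqD) (simp add: Ser_fa_mult Ser_fa_smult mult.assoc)
lemma fa_mult_zero_right: "fa_mult a fa_zero = fa_zero"
  by (rule Ser_eqD) (simp add: Ser_fa_mult Ser_fa_zero)
lemma fa_mult_zero_left: "fa_mult fa_zero a = fa_zero"
  by (rule Ser_eqD) (simp add: Ser_fa_mult Ser_fa_zero)

lemma R1_ideal:
  fixes d :: nat
  assumes d: "d > 0" "(of_nat d :: 'k::field) \<noteq> 0"
  shows "fa_ideal (R1 d :: 'k fa set)"
  unfolding fa_ideal_def
proof (intro conjI ballI)
  show "fa_subspace (R1 d :: 'k fa set)" by (rule R1_sub[OF d(1)])
  fix u a :: "'k fa" assume u: "u \<in> R1 d" and a: "a \<in> FA"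
  have S: "fa_subspace (R1 d :: 'k fa set)" by (rule R1_sub[OF d(1)])
  have "u \<in> V0 d" using u R1_V0[OF d(1)] by blast
  then have "fa_mult a u \<in> R1 d \<and> fa_mult u a \<in> R1 d"
  proof (induction rule: V0.induct)
    case (gen v)
    then show ?case using ideal_gen[OF d _ a] by blast
  next
    case zero
    then show ?case using S by (simp add: fa_mult_zero_right fa_mult_zero_left fa_subspace_def)
  next
    case (add p q)
    then show ?case using S by (simp add: fa_mult_add_right fa_mult_add_left fa_subspace_def)
  next
    case (smul p c)
    then show ?case using S by (simp add: fa_mult_smult_right fa_mult_smult_left fa_subspace_def)
  qed
  then show "fa_mult a u \<in> R1 d" "fa_mult u a \<in> R1 d" by auto
qed

theorem mainTheorem2:
  fixes d :: nat
  assumes "d > 0" and "(of_nat d :: 'k::field) \<noteq> 0"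
  shows "fa_ideal (R1 d :: 'k fa set) \<and> (R1 d :: 'k fa set) = R2 d"
proof
  have I: "fa_ideal (R1 d :: 'k fa set)" by (rule R1_ideal[OF assms])
  then show "fa_ideal (R1 d :: 'k fa set)" .
  have sub: "R1 d \<union> {fa_mult u (S_poly d v) | u v. u \<in> R1 d \<and> (\<forall>i. v i \<in> FA)} \<subseteq> (R1 d :: 'k fa set)"
    using I S_FA[OF assms(1)] by (auto simp: fa_ideal_def)
  show "(R1 d :: 'k fa set) = R2 d"
  proof
    show "R1 d \<subseteq> (R2 d :: 'k fa set)" unfolding R2_def using T_gen_sub by blast
    show "R2 d \<subseteq> (R1 d :: 'k fa set)" unfolding R2_def
      by (rule T_gen_least[OF R1_T_space[OF assms(1)] sub])
  qed
qed


end
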